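(* Let $G$ be a graph that is well-separable with respect to a set $\mathcal P$ of principal $k$-profiles, let $P,P'\in\mathcal P$ and let $(A,B)\in\mathcal R_{\rm eff}(P,P')$. Then there is a component $X$ of $G[A\setminus B]$ such that $(X\cup N(X),V(G)\setminus X)\in\mathcal R_{\rm eff}(P,P')$.
   Context: A separation of $G$ is an ordered pair $(A,B)$ of subsets of $V(G)$ with $A\cup B=V(G)$ and no edge between $A\setminus B$ and $B\setminus A$; its order is $|A\cap B|$. $(A,B)\le(C,D)$ means $A\subseteq C$, $D\subseteq B$. A profile is a set $P$ of separations with (P1) if $(C,D)\le(A,B)\in P$ then $(D,C)\notin P$, and (P2) if $(A,B),(C,D)\in P$ then $(B\cap D,A\cup C)\notin P$. $P$ is principal if for every family $((A_i,B_i))_{i\in I}$ in $P$ with all $A_i\cap B_i$ equal, $\bigcap_{i\in I}(B_i\setminus A_i)\neq\emptyset$. $P$ is a $k$-profile if all its separations have order $<k$ and for each separation $(A,B)$ of order $<k$, $(A,B)\in P$ or $(B,A)\in P$. A separation $(A,B)$ distinguishes $P,P'$ if $(A,B)\in P,(B,A)\in P'$ or vice versa, efficiently if no separation of smaller order distinguishes them. $\kappa(\mathcal P,G)$ is the minimum order of a separation distinguishing two profiles of $\mathcal P$. $\mathcal R_{\rm eff}(P,P')$ is the set of separations of order $\kappa(\mathcal P,G)$ distinguishing $P$ and $P'$ efficiently. $\mathcal R(k,\mathcal P,G)$ is the set of separations of finite order at most $k$ distinguishing two profiles of $\mathcal P$. A component $C$ of $G-(A\cap B)$ is degenerated if $N(C)\subsetneq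 A\cap B$. $G$ is well-separable with respect to $\mathcal P$ if for no separation $(A,B)\in\mathcal R(\kappa(\mathcal P,G),\mathcal P,G)$ does $G-(A\cap B)$ have a degenerated component (the paper phrases this as: for every separation of order $\kappa(\mathcal P,G)$ no component of $G-(A\cap B)$ is degenerated, that is, the set of separations $(C\cup N(C),V(G)\setminus C)$ with $C$ a degenerated component for a separation in $\mathcal R(\kappa(\mathcal P,G),\mathcal P,G)$ is empty). *)

theory Defs
  imports Main "HOL-Library.Extended_Nat"
begin

definition graph :: "'a set \<Rightarrow> ('a \<Rightarrow> 'a \<Rightarrow> bool) \<Rightarrow> bool" where
  "graph V E \<longleftrightarrow> (\<forall>x y. E x y \<longrightarrow> x \<in> V \<and> y \<in> V \<and> E y x \<and> x \<noteq> y)"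

type_synonym 'a sep = "'a set \<times> 'a set"

definition separation :: "'a set \<Rightarrow> ('a \<Rightarrow> 'a \<Rightarrow> bool) \<Rightarrow> 'a sep \<Rightarrow> bool" where
  "separation V E s \<longleftrightarrow> (case s of (A, B) \<Rightarrow>
     A \<union> B = V \<and> (\<forall>x\<in>A - B. \<forall>y\<in>B - A. \<not> E x y))"

definition order :: "'a sep \<Rightarrow> enat" where
  "order s = (case s of (A, B) \<Rightarrow> if finite (A \<inter> B) then enat (card (A \<inter> B)) else \<infinity>)"

definition sep_le :: "'a sep \<Rightarrow> 'a sep \<Rightarrow> bool" where
  "sep_le s t \<longleftrightarrow> (case s of (A, B) \<Rightarrow> case t of (C, D) \<Rightarrow> A \<subseteq> C \<and> D \<subseteq> B)"

definition inv_sep :: "'a sep \<Rightarrow> 'a sep" where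
  "inv_sep s = (snd s, fst s)"

definition profile :: "'a set \<Rightarrow> ('a \<Rightarrow> 'a \<Rightarrow> bool) \<Rightarrow> 'a sep set \<Rightarrow> bool" where
  "profile V E P \<longleftrightarrow>
     (\<forall>s\<in>P. separation V E s) \<and>
     (\<forall>A B C D. (C, D) \<in> P \<and> sep_le (A, B) (C, D) \<longrightarrow> (B, A) \<notin> P) \<and>
     (\<forall>A B C D. (A, B) \<in> P \<and> (C, D) \<in> P \<longrightarrow> (B \<inter> D, A \<union> C) \<notin> P)"

definition principal :: "'a sep set \<Rightarrow> bool" where
  "principal P \<longleftrightarrow>
     (\<forall>Q. Q \<subseteq> P \<and> Q \<noteq> {} \<and> (\<forall>(A, B)\<in>Q. \<forall>(C, D)\<in>Q. A \<inter> B = C \<inter> D)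
        \<longrightarrow> (\<Inter>(A, B)\<in>Q. B - A) \<noteq> {})"

definition k_profile :: "'a set \<Rightarrow> ('a \<Rightarrow> 'a \<Rightarrow> bool) \<Rightarrow> nat \<Rightarrow> 'a sep set \<Rightarrow> bool" where
  "k_profile V E k P \<longleftrightarrow> profile V E P \<and>
     (\<forall>s\<in>P. order s < enat k) \<and>
     (\<forall>A B. separation V E (A, B) \<and> order (A, B) < enat k \<longrightarrow> (A, B) \<in> P \<or> (B, A) \<in> P)"

definition distinguishes :: "'a sep \<Rightarrow> 'a sep set \<Rightarrow> 'a sep set \<Rightarrow> bool" where
  "distinguishes s P P' \<longleftrightarrow> (s \<in> P \<and> inv_sep s \<in> P') \<or> (inv_sep s \<in> P \<and> s \<in> P')"

definition distinguishes_eff ::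
    "'a set \<Rightarrow> ('a \<Rightarrow> 'a \<Rightarrow> bool) \<Rightarrow> 'a sep \<Rightarrow> 'a sep set \<Rightarrow> 'a sep set \<Rightarrow> bool" where
  "distinguishes_eff V E s P P' \<longleftrightarrow> separation V E s \<and> distinguishes s P P' \<and>
     (\<forall>t. separation V E t \<and> order t < order s \<longrightarrow> \<not> distinguishes t P P')"

text \<open>\<kappa>(\<P>,G): minimum order of a separation distinguishing two profiles of \<P>
  (\<infinity> if there is none).\<close>
definition kappa :: "'a set \<Rightarrow> ('a \<Rightarrow> 'a \<Rightarrow> bool) \<Rightarrow> 'a sep set set \<Rightarrow> enat" where
  "kappa V E \<P> = Inf {order s | s P P'. P \<in> \<P> \<and> P' \<in> \<P> \<and> separation V E s \<and> distinguishes s P P'}"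

definition R_eff ::
    "'a set \<Rightarrow> ('a \<Rightarrow> 'a \<Rightarrow> bool) \<Rightarrow> 'a sep set set \<Rightarrow> 'a sep set \<Rightarrow> 'a sep set \<Rightarrow> 'a sep set" where
  "R_eff V E \<P> P P' = {s. order s = kappa V E \<P> \<and> distinguishes_eff V E s P P'}"

definition R_sep :: "'a set \<Rightarrow> ('a \<Rightarrow> 'a \<Rightarrow> bool) \<Rightarrow> enat \<Rightarrow> 'a sep set set \<Rightarrow> 'a sep set" where
  "R_sep V E k \<P> = {s. separation V E s \<and> order s \<noteq> \<infinity> \<and> order s \<le> k \<and>
     (\<exists>P\<in>\<P>. \<exists>P'\<in>\<P>. distinguishes s P P')}"

definition component :: "'a set \<Rightarrow> ('a \<Rightarrow> 'a \<Rightarrow> bool) \<Rightarrow> 'a set \<Rightarrow> 'a set \<Rightarrow> bool" where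
  "component V E S C \<longleftrightarrow> S \<subseteq> V \<and>
     (\<exists>x\<in>S. C = {y. (x, y) \<in> {(u, v). u \<in> S \<and> v \<in> S \<and> E u v}\<^sup>*})"

definition nbh :: "'a set \<Rightarrow> ('a \<Rightarrow> 'a \<Rightarrow> bool) \<Rightarrow> 'a set \<Rightarrow> 'a set" where
  "nbh V E X = {y \<in> V - X. \<exists>x\<in>X. E x y}"

definition degenerated :: "'a set \<Rightarrow> ('a \<Rightarrow> 'a \<Rightarrow> bool) \<Rightarrow> 'a sep \<Rightarrow> 'a set \<Rightarrow> bool" where
  "degenerated V E s C \<longleftrightarrow> (case s of (A, B) \<Rightarrow>
     component V E (V - (A \<inter> B)) C \<and> nbh V E C \<subset> A \<inter> B)"

definition well_separable :: "'a set \<Rightarrow> ('a \<Rightarrow> 'a \<Rightarrow> bool) \<Rightarrow> 'a sep set set \<Rightarrow> bool" where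
  "well_separable V E \<P> \<longleftrightarrow>
     (\<forall>s\<in>R_sep V E (kappa V E \<P>) \<P>. \<not> (\<exists>C. degenerated V E s C))"

end

theory Submission
  imports Defs
begin

lemma dist_sym: "distinguishes t P P' \<longleftrightarrow> distinguishes t P' P"
  unfolding distinguishes_def by blast

lemma core:
  assumes sepAB: "separation V E (A,B)"
    and kp1: "k_profile V E k P1" and kp2: "k_profile V E k P2" and pr2: "principal P2"
    and in1: "(A,B) \<in> P1" and in2: "(B,A) \<in> P2"
    and eff: "\<forall>t. separation V E t \<and> order t < order (A,B) \<longrightarrow> \<not> distinguishes t P1 P2"
  shows "\<exists>X. component V E (A-B) X \<and> separation V E (X \<union> nbh V E X, V - X)
     \<and> distinguishes (X \<union> nbh V E X, V - X) P1 P2 \<and> order (X \<union> nbh V E X, V - X) = order (A,B)"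
proof -
  have UV: "A \<union> B = V" and noE: "\<forall>x\<in>A-B. \<forall>y\<in>B-A. \<not> E x y"
    using sepAB unfolding separation_def by auto
  have ordk: "order (A,B) < enat k" using kp1 in1 unfolding k_profile_def by blast
  have finS: "finite (A\<inter>B)"
  proof (rule ccontr)
    assume "\<not> finite (A\<inter>B)"
    then have "order (A,B) = \<infinity>" unfolding order_def by simp
    with ordk show False by simp
  qed
  have ordAB: "order (A,B) = enat (card (A\<inter>B))" using finS unfolding order_def by simp
  define S where "S = A \<inter> B"
  have SV: "S \<subseteq> V" using UV S_def by auto
  define R where "R = {(u, v). u \<in> A - B \<and> v \<in> A - B \<and> E u v}"
  define cp where "cp x = {y. (x,y) \<in> R\<^sup>*}" for x
  have cpsub: "cp x \<subseteq> A - B" if "x \<in> A - B" for x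
  proof
    fix y assume "y \<in> cp x"
    then have "(x,y) \<in> R\<^sup>*" by (simp add: cp_def)
    then show "y \<in> A - B"
      by (rule rtranclE) (use that R_def in auto)
  qed
  have cpself: "x \<in> cp x" for x by (simp add: cp_def)
  have cpclosed: "z \<in> cp x" if "y \<in> cp x" "E y z" "z \<in> A - B" "x \<in> A - B" for x y z
  proof -
    have "y \<in> A - B" using cpsub that by blast
    then have "(y,z) \<in> R" using that R_def by auto
    then show ?thesis using that(1) unfolding cp_def by (auto intro: rtrancl_into_rtrancl)
  qed
  have comp: "component V E (A-B) (cp x)" if "x \<in> A - B" for x
    unfolding component_def using that UV R_def cp_def by auto
  obtain x where xAB: "x \<in> A - B" and notin: "(cp x \<union> S, V - cp x) \<notin> P2"
  proof (rule ccontr)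
    assume "\<not> thesis"
    then have all: "\<forall>x\<in>A-B. (cp x \<union> S, V - cp x) \<in> P2" using that by blast
    define Q where "Q = insert (B,A) ((\<lambda>x. (cp x \<union> S, V - cp x)) ` (A - B))"
    have QP: "Q \<subseteq> P2" using all in2 Q_def by auto
    have eqint: "(cp x \<union> S) \<inter> (V - cp x) = S" if "x \<in> A - B" for x
      using cpsub[OF that] SV S_def by auto
    have qs: "fst q \<inter> snd q = S" if "q \<in> Q" for q
    proof -
      have "q = (B,A) \<or> (\<exists>y\<in>A-B. q = (cp y \<union> S, V - cp y))" using that Q_def by auto
      then show ?thesis
      proof
        assume "q = (B,A)" then show ?thesis using S_def by auto
      next
        assume "\<exists>y\<in>A-B. q = (cp y \<union> S, V - cp y)"
        then obtain y where "y \<in> A - B" "q = (cp y \<union> S, V - cp y)" by blast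
        then show ?thesis using eqint by simp
      qed
    qed
    have "\<forall>(A1, B1)\<in>Q. \<forall>(C, D)\<in>Q. A1 \<inter> B1 = C \<inter> D"
    proof (intro ballI, clarify)
      fix A1 B1 C D assume "(A1,B1) \<in> Q" "(C,D) \<in> Q"
      then show "A1 \<inter> B1 = C \<inter> D" using qs[of "(A1,B1)"] qs[of "(C,D)"] by simp
    qed
    then have "(\<Inter>(C, D)\<in>Q. D - C) \<noteq> {}" using pr2 QP unfolding principal_def Q_def by blast
    then obtain z where z: "z \<in> (\<Inter>(C, D)\<in>Q. D - C)" by blast
    have "z \<in> A - B" using z Q_def by auto
    moreover have "z \<in> (V - cp z) - (cp z \<union> S)" if "z \<in> A - B"
      using z that Q_def by auto
    ultimately show False using cpself by blast
  qed
  define X where "X = cp x"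
  define N where "N = nbh V E X"
  have XAB: "X \<subseteq> A - B" using cpsub xAB X_def by auto
  have XV: "X \<subseteq> V" using XAB UV by auto
  have NS: "N \<subseteq> S"
  proof
    fix y assume "y \<in> N"
    then obtain z where y: "y \<in> V" "y \<notin> X" "z \<in> X" "E z y" unfolding N_def nbh_def by auto
    have "y \<notin> A - B" using cpclosed[of z x y] y xAB X_def by auto
    moreover have "y \<notin> B - A" using noE y XAB by auto
    ultimately show "y \<in> S" using y UV S_def by auto
  qed
  have NV: "N \<subseteq> V" and NX: "N \<inter> X = {}" unfolding N_def nbh_def by auto
  have sep1: "separation V E (X \<union> S, V - X)"
    unfolding separation_def
  proof (simp, intro conjI ballI)
    show "X \<union> S \<union> (V - X) = V" using XV SV by auto
    fix u v assume u: "u \<in> X \<union> S - (V - X)" and v: "v \<in> V - X - (X \<union> S)"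
    show "\<not> E u v"
    proof
      assume e: "E u v"
      have uX: "u \<in> X" using u SV by auto
      have "v \<notin> A - B" using cpclosed[of u x v] uX v xAB X_def e by auto
      moreover have "v \<notin> B - A" using noE uX XAB e by auto
      ultimately show False using v UV S_def by auto
    qed
  qed
  have int1: "(X \<union> S) \<inter> (V - X) = S" using XAB SV S_def by auto
  have ord1: "order (X \<union> S, V - X) = order (A,B)"
    using int1 ordAB finS S_def unfolding order_def by simp
  have P2a: "(V - X, X \<union> S) \<in> P2"
  proof -
    have "order (X \<union> S, V - X) < enat k" using ord1 ordk by simp
    then have "(X \<union> S, V - X) \<in> P2 \<or> (V - X, X \<union> S) \<in> P2"
      using kp2 sep1 unfolding k_profile_def by blast
    then show ?thesis using notin X_def by blast
  qed
  have sep2: "separation V E (X \<union> N, V - X)"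
    unfolding separation_def
  proof (simp, intro conjI ballI)
    show "X \<union> N \<union> (V - X) = V" using XV NV by auto
    fix u v assume u: "u \<in> X \<union> N - (V - X)" and v: "v \<in> V - X - (X \<union> N)"
    show "\<not> E u v"
    proof
      assume e: "E u v"
      have uX: "u \<in> X" using u NV by auto
      then have "v \<in> N" using v e unfolding N_def nbh_def by auto
      then show False using v by auto
    qed
  qed
  have int2: "(X \<union> N) \<inter> (V - X) = N" using NV NX by auto
  have finN: "finite N" using NS finS S_def finite_subset by metis
  have cardN: "card N \<le> card S" using NS finS S_def card_mono by metis
  have ord2: "order (X \<union> N, V - X) = enat (card N)"
    using int2 finN unfolding order_def by simp
  have ord2le: "order (X \<union> N, V - X) \<le> order (A,B)"
    using ord2 ordAB cardN S_def by simp
  have ord2k: "order (X \<union> N, V - X) < enat k" using ord2le ordk by (meson le_less_trans)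
  have tP1: "(X \<union> N, V - X) \<in> P1"
  proof -
    have "sep_le (X \<union> N, V - X) (A, B)"
      unfolding sep_le_def using XAB NS S_def UV by auto
    then have "(V - X, X \<union> N) \<notin> P1" using kp1 in1 unfolding k_profile_def profile_def by blast
    then show ?thesis using kp1 sep2 ord2k unfolding k_profile_def by blast
  qed
  have SVP2: "(S, V) \<in> P2"
  proof -
    have sepSV: "separation V E (S, V)" unfolding separation_def using SV by auto
    have "order (S, V) = order (A,B)" using SV ordAB finS S_def unfolding order_def
      by (simp add: Int_absorb2)
    then have oSV: "order (S,V) < enat k" using ordk by simp
    have "sep_le (S, V) (V - X, X \<union> S)" unfolding sep_le_def using SV XAB XV S_def by auto
    then have "(V, S) \<notin> P2" using kp2 P2a unfolding k_profile_def profile_def by blast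
    then show ?thesis using kp2 sepSV oSV unfolding k_profile_def by blast
  qed
  have tP2: "(V - X, X \<union> N) \<in> P2"
  proof -
    have "(X \<union> N, V - X) \<notin> P2"
    proof
      assume h: "(X \<union> N, V - X) \<in> P2"
      have "((X \<union> S) \<inter> (V - X), (V - X) \<union> (X \<union> N)) \<notin> P2"
        using kp2 P2a h unfolding k_profile_def profile_def by blast
      moreover have "(X \<union> S) \<inter> (V - X) = S" using int1 .
      moreover have "(V - X) \<union> (X \<union> N) = V" using XV NV by auto
      ultimately show False using SVP2 by simp
    qed
    then show ?thesis using kp2 sep2 ord2k unfolding k_profile_def by blast
  qed
  have dist: "distinguishes (X \<union> N, V - X) P1 P2"
    unfolding distinguishes_def inv_sep_def using tP1 tP2 by simp
  have "\<not> order (X \<union> N, V - X) < order (A,B)" using eff sep2 dist by blast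
  then have "order (X \<union> N, V - X) = order (A,B)" using ord2le by simp
  then show ?thesis using comp[OF xAB] sep2 dist X_def N_def by blast
qed

theorem lemma2p7:
  fixes V :: "'a set" and E :: "'a \<Rightarrow> 'a \<Rightarrow> bool" and k :: nat
    and \<P> :: "'a sep set set" and P P' :: "'a sep set" and A B :: "'a set"
  assumes "graph V E"
    and "\<forall>Q\<in>\<P>. k_profile V E k Q \<and> principal Q"
    and "well_separable V E \<P>"
    and "P \<in> \<P>" and "P' \<in> \<P>"
    and "(A, B) \<in> R_eff V E \<P> P P'"
  shows "\<exists>X. component V E (A - B) X \<and> (X \<union> nbh V E X, V - X) \<in> R_eff V E \<P> P P'"
proof -
  have ok: "order (A,B) = kappa V E \<P>" and sep: "separation V E (A,B)"
    and d: "distinguishes (A,B) P P'"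
    and eff: "\<forall>t. separation V E t \<and> order t < order (A,B) \<longrightarrow> \<not> distinguishes t P P'"
    using assms(6) unfolding R_eff_def distinguishes_eff_def by auto
  have kp: "k_profile V E k P" "principal P" "k_profile V E k P'" "principal P'"
    using assms(2,4,5) by auto
  obtain X where X: "component V E (A-B) X" "separation V E (X \<union> nbh V E X, V - X)"
    "distinguishes (X \<union> nbh V E X, V - X) P P'" "order (X \<union> nbh V E X, V - X) = order (A,B)"
  proof (cases "(A,B) \<in> P \<and> (B,A) \<in> P'")
    case True
    then have h: "(A,B) \<in> P" "(B,A) \<in> P'" by auto
    from core[OF sep kp(1) kp(3) kp(4) h(1) h(2) eff] that show ?thesis by blast
  next
    case False
    then have h: "(B,A) \<in> P" "(A,B) \<in> P'" using d unfolding distinguishes_def inv_sep_def by auto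
    have eff': "\<forall>t. separation V E t \<and> order t < order (A,B) \<longrightarrow> \<not> distinguishes t P' P"
      using eff by (simp add: dist_sym)
    from core[OF sep kp(3) kp(1) kp(2) h(2) h(1) eff'] obtain Y where
      "component V E (A-B) Y" "separation V E (Y \<union> nbh V E Y, V - Y)"
      "distinguishes (Y \<union> nbh V E Y, V - Y) P' P" "order (Y \<union> nbh V E Y, V - Y) = order (A,B)"
      by blast
    then show ?thesis using that dist_sym by metis
  qed
  have "(X \<union> nbh V E X, V - X) \<in> R_eff V E \<P> P P'"
    unfolding R_eff_def distinguishes_eff_def mem_Collect_eq using X ok eff by auto
  then show ?thesis using X(1) by blast
qed

end
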